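(* Let $U$ be the distribution function of a sub-probability measure on $(0,\infty)$, set $\hat U(\lambda)=\int_0^\infty e^{-\lambda x}\,dU(x)$, and let $p>0$. (a) If for some $C_2>0$, $\hat U(\lambda)\le C_2\lambda^{-p}$ for all $\lambda>0$, then $U(a)\le eC_2a^p$ for all $a>0$. (b) Assume $\hat U(\lambda)\le C_2\lambda^{-p}$ for all $\lambda>0$ and, for some $C_1>0$ and $\underline\lambda\ge0$, $\hat U(\lambda)\ge C_1\lambda^{-p}$ for all $\lambda>\underline\lambda$. If \[d_1=\frac{C_1}2\Bigl(2\log\Bigl(\Bigl(\frac{2p}e\Bigr)^p\frac{4eC_2}{C_1}\Bigr)\vee2p\vee\underline\lambda\Bigr)^{-p},\] then $U(a)\ge d_1a^p$ for all $a\in[0,1]$. In particular, if $p\le1$ and $\underline\lambda\le4$, then \[U(a)\ge\frac{C_1}4\Bigl(\log\Bigl(\frac{4eC_2}{C_1}\Bigr)\Bigr)^{-1}a^p\quad\text{for all }a\in[0,1].\] *)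

theory Defs
  imports "HOL-Probability.Probability"
begin

definition dfun :: "real measure \<Rightarrow> real \<Rightarrow> real" where
  "dfun M a = measure M {..a}"

definition lap :: "real measure \<Rightarrow> real \<Rightarrow> real" where
  "lap M l = (\<integral>x. exp (- l * x) \<partial>M)"

end

theory Submission
  imports Defs
begin

lemma basics:
  assumes sub: "subprob_space M" and sets: "sets M = sets borel"
    and z: "emeasure M {..0::real} = 0"
  shows sp: "space M = UNIV" and ae: "AE x in M. x > 0"
    and meas: "\<And>f::real\<Rightarrow>real. f \<in> borel_measurable borel \<Longrightarrow> f \<in> borel_measurable M"
    and ind: "\<And>a. integrable M (indicator {..a::real} :: real \<Rightarrow> real)"
    and intg: "\<And>l. l \<ge> 0 \<Longrightarrow> integrable M (\<lambda>x. exp (- l * x))"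
proof -
  interpret subprob_space M by fact
  show sp: "space M = UNIV" using sets_eq_imp_space_eq[OF sets] by simp
  show meas: "\<And>f::real\<Rightarrow>real. f \<in> borel_measurable borel \<Longrightarrow> f \<in> borel_measurable M"
    by (subst measurable_cong_sets[OF sets refl]) auto
  have nul: "{..0::real} \<in> null_sets M" using z sets by (auto intro: null_setsI)
  show ae: "AE x in M. x > 0"
    by (rule AE_I'[OF nul]) auto
  show "\<And>a. integrable M (indicator {..a::real} :: real \<Rightarrow> real)"
    using sets by (simp add: integrable_indicator_iff sp less_top[symmetric])
  fix l :: real assume l: "l \<ge> 0"
  show "integrable M (\<lambda>x. exp (- l * x))"
  proof (rule integrable_const_bound[where B=1])
    show "AE x in M. norm (exp (- l * x)) \<le> 1"
      using ae by eventually_elim (use l in \<open>auto simp: mult_nonneg_nonneg\<close>)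
    show "(\<lambda>x. exp (- l * x)) \<in> borel_measurable M" by (intro meas) measurable
  qed
qed

lemma partA:
  assumes sub: "subprob_space M" and sets: "sets M = sets borel"
    and z: "emeasure M {..0::real} = 0"
    and C2: "C2 > 0" and up: "\<forall>l>0. lap M l \<le> C2 * l powr (-p)" and a: "a > 0"
  shows "dfun M a \<le> exp 1 * C2 * a powr p"
proof -
  note B = basics[OF sub sets z]
  have "dfun M a = (\<integral>x. indicator {..a} x \<partial>M)"
    by (simp add: dfun_def B(1))
  also have "\<dots> \<le> (\<integral>x. exp 1 * exp (- (1/a) * x) \<partial>M)"
  proof (rule integral_mono_AE)
    show "integrable M (indicat_real {..a})" by (rule B(4))
    show "integrable M (\<lambda>x. exp 1 * exp (- (1 / a) * x))"
      using B(5)[of "1/a"] a by simp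
    show "AE x in M. indicat_real {..a} x \<le> exp 1 * exp (- (1 / a) * x)"
      using B(2)
    proof eventually_elim
      case (elim x)
      show ?case
      proof (cases "x \<le> a")
        case True
        have "1 - x/a \<ge> 0" using True a by (simp add: field_simps)
        hence "1 \<le> exp (1 - x/a)" by simp
        moreover have "exp 1 * exp (- (1/a) * x) = exp (1 - x/a)"
          by (simp add: exp_diff exp_minus field_simps)
        ultimately show ?thesis using True by simp
      qed simp
    qed
  qed
  also have "\<dots> = exp 1 * lap M (1/a)" by (simp add: lap_def)
  also have "\<dots> \<le> exp 1 * (C2 * (1/a) powr (-p))"
    using up a by simp
  also have "\<dots> = exp 1 * C2 * a powr p"
    using a by (simp add: powr_divide powr_minus_divide)
  finally show ?thesis .
qed

lemma splitB:
  assumes sub: "subprob_space M" and sets: "sets M = sets borel"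
    and z: "emeasure M {..0::real} = 0"
    and l: "l > 0" and a: "a > 0"
  shows "lap M l \<le> dfun M a + exp (- l * a / 2) * lap M (l/2)"
proof -
  note B = basics[OF sub sets z]
  have "lap M l \<le> (\<integral>x. indicator {..a} x + exp (- l * a / 2) * exp (- (l/2) * x) \<partial>M)"
    unfolding lap_def
  proof (rule integral_mono_AE)
    show "integrable M (\<lambda>x. exp (- l * x))" using B(5) l by simp
    show "integrable M (\<lambda>x. indicat_real {..a} x + exp (- l * a / 2) * exp (- (l / 2) * x))"
      using B(4) B(5)[of "l/2"] l by simp
    show "AE x in M. exp (- l * x) \<le> indicat_real {..a} x + exp (- l * a / 2) * exp (- (l / 2) * x)"
      using B(2)
    proof eventually_elim
      case (elim x)
      show ?case
      proof (cases "x \<le> a")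
        case True
        have "exp (- l * x) \<le> 1" using l elim by simp
        moreover have "0 \<le> exp (- l * a / 2) * exp (- (l / 2) * x)" by simp
        moreover have "indicat_real {..a} x = 1" using True by simp
        ultimately show ?thesis by linarith
      next
        case False
        have "l * a \<le> l * x" using False l by simp
        hence "exp (- l * x) \<le> exp (- l * a / 2 + - (l / 2) * x)" by simp
        moreover have "exp (- l * a / 2 + - (l / 2) * x) = exp (- l * a / 2) * exp (- (l / 2) * x)"
          by (rule exp_add)
        moreover have "indicat_real {..a} x = 0" using False by simp
        ultimately show ?thesis by linarith
      qed
    qed
  qed
  also have "\<dots> = dfun M a + exp (- l * a / 2) * lap M (l/2)"
    using B(4) B(5)[of "l/2"] l by (simp add: lap_def dfun_def B(1))
  finally show ?thesis .
qed

lemma lowerB: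
  assumes sub: "subprob_space M" and sets: "sets M = sets borel"
    and z: "emeasure M {..0::real} = 0" and p: "p > 0"
    and C1: "C1 > 0" and C2: "C2 > 0" and l0: "l0 \<ge> 0"
    and up: "\<forall>l>0. lap M l \<le> C2 * l powr (-p)"
    and low: "\<forall>l>l0. lap M l \<ge> C1 * l powr (-p)"
    and t: "t > 0" "t \<ge> l0" and key: "2 powr p * C2 * exp (- t / 2) \<le> C1 / 2"
    and a: "0 < a" "a \<le> 1"
  shows "dfun M a \<ge> C1 / 2 * t powr (-p) * a powr p"
proof -
  have bnd: "dfun M a \<ge> C1 / 2 * l powr (-p)" if l: "l \<in> {t/a<..<t/a+1}" for l
  proof -
    have ta: "t \<le> t / a" using t a by (simp add: field_simps)
    have lpos: "l > 0" and ll0: "l > l0" using l ta t by auto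
    have la: "l * a > t" using l a by (simp add: field_simps)
    have "C1 * l powr (-p) \<le> lap M l" using low ll0 by simp
    also have "\<dots> \<le> dfun M a + exp (- l * a / 2) * lap M (l/2)"
      by (rule splitB[OF sub sets z lpos a(1)])
    also have "\<dots> \<le> dfun M a + exp (- l * a / 2) * (C2 * (l/2) powr (-p))"
      using up lpos by (intro add_left_mono mult_left_mono) auto
    also have "\<dots> \<le> dfun M a + exp (- t / 2) * (C2 * (l/2) powr (-p))"
      using la C2 by (intro add_left_mono mult_right_mono) auto
    also have "(l/2) powr (-p) = 2 powr p * l powr (-p)"
      by (simp add: powr_divide powr_minus_divide)
    also have "exp (- t / 2) * (C2 * (2 powr p * l powr (-p))) = (2 powr p * C2 * exp (- t / 2)) * l powr (-p)"
      by simp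
    also have "\<dots> \<le> C1 / 2 * l powr (-p)"
      using key by (intro mult_right_mono) auto
    finally show ?thesis by simp
  qed
  have lim: "((\<lambda>l. C1 / 2 * l powr (-p)) \<longlongrightarrow> C1 / 2 * (t/a) powr (-p)) (at_right (t/a))"
    using t a by (intro tendsto_intros) auto
  have ev: "eventually (\<lambda>l. C1 / 2 * l powr (-p) \<le> dfun M a) (at_right (t/a))"
    by (rule eventually_at_rightI[where b="t/a+1"]) (use bnd in auto)
  have "C1 / 2 * (t/a) powr (-p) \<le> dfun M a"
    by (rule tendsto_le[OF trivial_limit_at_right_real tendsto_const lim ev])
  moreover have "(t/a) powr (-p) = t powr (-p) * a powr p"
    using t a by (simp add: powr_divide powr_minus_divide)
  ultimately show ?thesis by simp
qed

lemma pp_ge: assumes p: "p > (0::real)" shows "p powr p * exp 1 / exp p \<ge> 1"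
proof -
  have "ln (1/p) \<le> 1/p - 1" using p by (intro ln_le_minus_one) auto
  hence "- ln p \<le> 1/p - 1" using p by (simp add: ln_div)
  hence "p * (- ln p) \<le> p * (1/p - 1)" using p by (intro mult_left_mono) auto
  moreover have "p * (1/p - 1) = 1 - p" using p by (simp add: field_simps)
  ultimately have h: "0 \<le> p * ln p + 1 - p" by simp
  have "p powr p * exp 1 / exp p = exp (p * ln p + 1 - p)"
    using p by (simp add: powr_def exp_add exp_diff mult.commute)
  thus ?thesis using h by simp
qed

lemma dfun0: assumes "emeasure M {..0::real} = 0" shows "dfun M 0 = 0"
  using assms by (simp add: dfun_def measure_def)

theorem lemma4p7:
  fixes M :: "real measure" and p :: real
  assumes "subprob_space M" and "sets M = sets borel"
    and "emeasure M {..0} = 0"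
    and "p > 0"
  shows
   "(\<forall>C2>0. (\<forall>l>0. lap M l \<le> C2 * l powr (-p)) \<longrightarrow>
        (\<forall>a>0. dfun M a \<le> exp 1 * C2 * a powr p))
    \<and>
    (\<forall>C1 C2 l0. C1 > 0 \<and> C2 > 0 \<and> l0 \<ge> 0 \<and>
        (\<forall>l>0. lap M l \<le> C2 * l powr (-p)) \<and>
        (\<forall>l>l0. lap M l \<ge> C1 * l powr (-p)) \<longrightarrow>
        (let d1 = C1 / 2 * (max (max (2 * ln ((2 * p / exp 1) powr p * (4 * exp 1 * C2 / C1)))
                                       (2 * p)) l0) powr (-p)
         in \<forall>a\<in>{0..1}. dfun M a \<ge> d1 * a powr p)
      \<and> (p \<le> 1 \<and> l0 \<le> 4 \<longrightarrow>
           (\<forall>a\<in>{0..1}. dfun M a \<ge> C1 / 4 * inverse (ln (4 * exp 1 * C2 / C1)) * a powr p)))"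
proof (intro conjI allI impI)
  fix C2 a :: real
  assume "C2 > 0" "\<forall>l>0. lap M l \<le> C2 * l powr (-p)" "a > 0"
  thus "dfun M a \<le> exp 1 * C2 * a powr p" using partA[OF assms(1-3)] by blast
next
  fix C1 C2 l0 :: real
  assume H: "C1 > 0 \<and> C2 > 0 \<and> l0 \<ge> 0 \<and>
        (\<forall>l>0. lap M l \<le> C2 * l powr (-p)) \<and> (\<forall>l>l0. lap M l \<ge> C1 * l powr (-p))"
  hence C1: "C1 > 0" and C2: "C2 > 0" and l0: "l0 \<ge> 0"
    and up: "\<forall>l>0. lap M l \<le> C2 * l powr (-p)" and low: "\<forall>l>l0. lap M l \<ge> C1 * l powr (-p)"
    by auto
  note LB = lowerB[OF assms(1-4) C1 C2 l0 up low]
  have zero: "dfun M 0 = 0" by (rule dfun0[OF assms(3)])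
  have p0: "p \<noteq> 0" using assms(4) by simp
  {
    define X where "X = (2 * p / exp 1) powr p * (4 * exp 1 * C2 / C1)"
    define t where "t = max (max (2 * ln X) (2 * p)) l0"
    have Xpos: "X > 0" unfolding X_def using assms(4) C1 C2 by simp
    have tpos: "t > 0" and tl0: "t \<ge> l0" unfolding t_def using assms(4) by auto
    have "exp (- t / 2) \<le> exp (- ln X)" unfolding t_def by simp
    also have "\<dots> = 1 / X" using Xpos by (simp add: exp_minus inverse_eq_divide)
    finally have e: "exp (- t / 2) \<le> 1 / X" .
    have lnx: "ln (2 * p / exp 1) = ln 2 + ln p - 1" using assms(4) by (simp add: ln_div ln_mult)
    have "(2 * p / exp 1) powr p = exp (p * ln 2 + p * ln p - p)"
      using assms(4) unfolding powr_def lnx by (simp add: algebra_simps)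
    also have "\<dots> = 2 powr p * (p powr p / exp p)"
      using assms(4) by (simp add: powr_def exp_add exp_diff mult.commute)
    finally have pw: "(2 * p / exp 1) powr p = 2 powr p * (p powr p / exp p)" .
    have "2 powr p * C2 * exp (- t / 2) \<le> 2 powr p * C2 * (1 / X)"
      using e C2 by (intro mult_left_mono) auto
    also have "\<dots> = C1 / (4 * (p powr p * exp 1 / exp p))"
      unfolding X_def pw using C1 C2 by (simp add: field_simps)
    also have "\<dots> \<le> C1 / 4"
    proof -
      define q where "q = p powr p * exp 1 / exp p"
      have "q \<ge> 1" unfolding q_def by (rule pp_ge[OF assms(4)])
      hence "C1 / (4 * q) \<le> C1 / 4" using C1 by (intro divide_left_mono) auto
      thus ?thesis unfolding q_def .
    qed
    finally have key: "2 powr p * C2 * exp (- t / 2) \<le> C1 / 2" using C1 by simp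
    show "let d1 = C1 / 2 * (max (max (2 * ln ((2 * p / exp 1) powr p * (4 * exp 1 * C2 / C1)))
                                       (2 * p)) l0) powr (-p)
         in \<forall>a\<in>{0..1}. dfun M a \<ge> d1 * a powr p"
      unfolding Let_def X_def[symmetric] t_def[symmetric]
    proof
      fix a :: real assume a: "a \<in> {0..1}"
      show "C1 / 2 * t powr - p * a powr p \<le> dfun M a"
      proof (cases "a = 0")
        case True thus ?thesis using zero p0 by simp
      next
        case False thus ?thesis using a LB[OF tpos tl0 key] by auto
      qed
    qed
  }
  assume P: "p \<le> 1 \<and> l0 \<le> 4"
  define L where "L = ln (4 * exp 1 * C2 / C1)"
  have "C1 * (l0+1) powr (-p) \<le> lap M (l0+1)" using low by simp
  also have "\<dots> \<le> C2 * (l0+1) powr (-p)" using up l0 by simp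
  finally have c: "C1 * (l0+1) powr (-p) \<le> C2 * (l0+1) powr (-p)" .
  have "(l0+1) powr (-p) > 0" using l0 by simp
  hence C12: "C1 \<le> C2" using c by (simp add: mult_le_cancel_right_pos)
  have e3: "exp 1 \<le> (3::real)" by (rule exp_le)
  have "exp 2 = exp 1 * exp (1::real)" by (simp add: exp_add[symmetric])
  also have "\<dots> \<le> 4 * exp 1" using e3 by simp
  also have "\<dots> \<le> 4 * exp 1 * C2 / C1" using C12 C1 by (simp add: field_simps)
  finally have "exp 2 \<le> 4 * exp 1 * C2 / C1" .
  hence L2: "L \<ge> 2" unfolding L_def using C1 C2 by (simp add: ln_ge_iff)
  have tpos: "2 * L > 0" and tl0: "2 * L \<ge> l0" using L2 P by auto
  have eL: "exp (- (2 * L) / 2) = C1 / (4 * exp 1 * C2)"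
    unfolding L_def using C1 C2 by (simp add: exp_minus)
  have "2 powr p \<le> 2 powr 1" using P by (intro powr_mono) auto
  hence "2 powr p \<le> (2::real)" by simp
  moreover have "1 \<le> exp (1::real)" by simp
  ultimately have "2 powr p \<le> 2 * exp 1" by linarith
  hence "2 powr p * C2 * exp (- (2*L) / 2) \<le> (2 * exp 1) * C2 * (C1 / (4 * exp 1 * C2))"
    unfolding eL using C1 C2 by (intro mult_right_mono) auto
  also have "\<dots> = C1 / 2" using C2 by (simp add: field_simps)
  finally have key: "2 powr p * C2 * exp (- (2*L) / 2) \<le> C1 / 2" .
  have pw: "(2*L) powr p \<le> (2*L) powr 1" using P L2 by (intro powr_mono) auto
  have cmp: "C1 / 4 * inverse L \<le> C1 / 2 * (2*L) powr (-p)"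
  proof -
    have "(2*L) powr p > 0" using L2 by simp
    hence "1 / (2*L) \<le> 1 / (2*L) powr p" using pw L2 by (simp add: frac_le)
    hence "C1 / 2 * (1 / (2*L)) \<le> C1 / 2 * (1 / (2*L) powr p)" using C1 by (intro mult_left_mono) auto
    thus ?thesis using L2 by (simp add: powr_minus_divide field_simps)
  qed
  show "\<forall>a\<in>{0..1}. dfun M a \<ge> C1 / 4 * inverse (ln (4 * exp 1 * C2 / C1)) * a powr p"
    unfolding L_def[symmetric]
  proof
    fix a :: real assume a: "a \<in> {0..1}"
    show "C1 / 4 * inverse L * a powr p \<le> dfun M a"
    proof (cases "a = 0")
      case True thus ?thesis using zero p0 by simp
    next
      case False
      hence "C1 / 2 * (2*L) powr (-p) * a powr p \<le> dfun M a" using a LB[OF tpos tl0 key] by auto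
      moreover have "C1 / 4 * inverse L * a powr p \<le> C1 / 2 * (2*L) powr (-p) * a powr p"
        using cmp by (intro mult_right_mono) auto
      ultimately show ?thesis by linarith
    qed
  qed
qed

end
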